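(* Consider the following drone network. Drone base stations (DBSs) move in a plane (the DBS plane) at constant height above the ground; let $\mathbf{o}'$ be a fixed reference point of this plane. At time $0$ the DBS locations form a homogeneous Poisson point process (PPP) of density $\lambda_0$. The serving DBS is the DBS nearest to $\mathbf{o}'$ at time $0$, at distance $u_0$ from $\mathbf{o}'$; conditioned on $u_0$, the other DBSs (the interfering DBSs) at time $0$ form a PPP with density $\lambda_0$ outside the disc $b(\mathbf{o}',u_0)$ and density $0$ inside it. The serving DBS flies towards $\mathbf{o}'$ at speed $v$ and hovers there after arrival (UE dependent model). The interfering DBSs move according to an i.i.d. mobility model with speed $v$. Then, for every time $t$ and every $u_0$, the expected number of interfering DBSs located at time $t$ in the disc $\mathcal{B}=b(\mathbf{o}',u_0+vt)$ is maximized, over the space of all i.i.d. mobility models (including ones in which the drones follow curved trajectories), by the straight-line (SL) mobility model.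
   Context: $b(\mathbf{x},r)$ denotes the disc of radius $r$ centered at $\mathbf{x}$ in the DBS plane. An i.i.d. mobility model (with speed $v$): each interfering DBS follows a trajectory drawn independently of the other DBSs and of the initial locations, from a common distribution, moving at constant speed $v$; the direction of its net displacement is uniform on $[0,2\pi)$ and independent of the length $L(t)=\|\mathbf{x}(t)-\mathbf{x}(0)\|$ of the net displacement up to time $t$ (so $L(t)\le vt$). SL mobility model: each DBS moves forever along a straight line in a direction $\Theta\sim U[0,2\pi)$, drawn independently of other DBSs, at constant speed $v$ (so $L(t)=vt$). *)

theory Defs
  imports "HOL-Probability.Probability"
begin

text \<open>Points of the DBS plane are modelled as real \<times> real (Euclidean norm).
A mobility model of a single DBS is a random trajectory of displacements:
X w s = x(s) - x(0) on a probability space M.\<close>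

definition uniform_angle :: "'w measure \<Rightarrow> ('w \<Rightarrow> real) \<Rightarrow> bool" where
  "uniform_angle M \<Theta> \<longleftrightarrow>
     \<Theta> \<in> borel_measurable M \<and> distr M borel \<Theta> = uniform_measure lborel {0..<2*pi}"

text \<open>i.i.d. mobility model with speed v (law of the displacement trajectory of one
interfering DBS; the DBSs use independent copies, independent of initial locations):
speed v (so the net displacement satisfies dist(x(s),x(s')) <= v|s-s'|), and for every
time t the direction of the net displacement is uniform on [0,2 pi) and independent of
its length L(t).\<close>
definition iid_mobility :: "'w measure \<Rightarrow> ('w \<Rightarrow> real \<Rightarrow> real \<times> real) \<Rightarrow> real \<Rightarrow> bool" where
  "iid_mobility M X v \<longleftrightarrow>
     prob_space M \<and>
     (\<forall>w. X w 0 = 0) \<and>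
     (\<forall>w s s'. 0 \<le> s \<longrightarrow> 0 \<le> s' \<longrightarrow> dist (X w s) (X w s') \<le> v * \<bar>s - s'\<bar>) \<and>
     (\<forall>t\<ge>0. (\<lambda>w. X w t) \<in> borel_measurable M \<and>
        (\<exists>\<Theta>. uniform_angle M \<Theta> \<and>
              prob_space.indep_var M borel (\<lambda>w. norm (X w t)) borel \<Theta> \<and>
              (\<forall>w\<in>space M. X w t = (norm (X w t) * cos (\<Theta> w), norm (X w t) * sin (\<Theta> w)))))"

definition sl_traj :: "real \<Rightarrow> ('w \<Rightarrow> real) \<Rightarrow> 'w \<Rightarrow> real \<Rightarrow> real \<times> real" where
  "sl_traj v \<Theta> w s = (v * s * cos (\<Theta> w), v * s * sin (\<Theta> w))"

text \<open>Expected number of interfering DBSs in the set A at time t: initial positions form a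
PPP of density lam0 outside the disc b(c,u0) (density 0 inside), each point is displaced
independently according to the mobility model (M,X).  By the definition of the mean measure
of the independently marked PPP this is the integral below.\<close>
definition interf_count ::
  "real \<Rightarrow> real \<times> real \<Rightarrow> real \<Rightarrow> 'w measure \<Rightarrow> ('w \<Rightarrow> real \<Rightarrow> real \<times> real) \<Rightarrow> real
     \<Rightarrow> (real \<times> real) set \<Rightarrow> ennreal" where
  "interf_count lam0 c u0 M X t A =
     (\<integral>\<^sup>+ x. ennreal lam0 * indicator (- ball c u0) x * emeasure M {w \<in> space M. x + X w t \<in> A} \<partial>lborel)"

end

theory Submission
  imports Defs
begin

lemma indep_const:
  assumes "prob_space N" "\<Theta> \<in> borel_measurable N"
  shows "prob_space.indep_var N borel (\<lambda>w. k::real) borel \<Theta>"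
proof -
  interpret prob_space N by fact
  have A: "sigma_sets (space N) {(\<lambda>w. k) -` A \<inter> space N | A. A \<in> sets borel} \<subseteq> {{}, space N}"
    by (rule sigma_algebra.sigma_sets_subset[OF sigma_algebra_trivial]) auto
  have B: "sigma_sets (space N) {\<Theta> -` A \<inter> space N | A. A \<in> sets borel} \<subseteq> events"
    by (rule sets.sigma_sets_subset) (auto intro: measurable_sets assms(2))
  have C: "prob (a \<inter> b) = prob a * prob b" if "a \<in> {{}, space N}" "b \<in> events" for a b
    using that by (auto simp: prob_space Int_absorb1 sets.sets_into_space)
  show ?thesis unfolding indep_var_eq
    apply (intro conjI measurable_const assms(2) indep_setI)
       apply simp
      apply (rule order.trans[OF A]; simp)
     apply (rule B)
    apply (rule C)
     apply (rule subsetD[OF A], assumption)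
    apply (rule subsetD[OF B], assumption)
    done
qed

lemma count_eq:
  fixes Y :: "'w \<Rightarrow> real \<times> real"
  assumes PS: "prob_space M" and Ym[measurable]: "Y \<in> borel_measurable M"
    and bnd: "\<And>w. w \<in> space M \<Longrightarrow> norm (Y w) \<le> r"
  shows "(\<integral>\<^sup>+ x. indicator (- ball c u0) x * emeasure M {w\<in>space M. x + Y w \<in> ball c (u0+r)} \<partial>lborel)
     + emeasure lborel (ball c u0) = emeasure lborel (ball c (u0+r))"
proof -
  interpret prob_space M by fact
  interpret pair_sigma_finite lborel M
    by (simp add: pair_sigma_finite_def lborel.sigma_finite_measure_axioms sigma_finite_measure_axioms)
  define B where "B = ball c (u0+r)"
  have Bm[measurable]: "B \<in> sets borel" unfolding B_def by simp
  have g_eq: "emeasure M {w\<in>space M. x + Y w \<in> B} = (\<integral>\<^sup>+w. indicator B (x + Y w) \<partial>M)" for x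
  proof -
    have "{w\<in>space M. x + Y w \<in> B} \<in> sets M" by measurable
    then have "emeasure M {w\<in>space M. x + Y w \<in> B} = (\<integral>\<^sup>+w. indicator {w\<in>space M. x + Y w \<in> B} w \<partial>M)"
      by simp
    also have "\<dots> = (\<integral>\<^sup>+w. indicator B (x + Y w) \<partial>M)"
      by (intro nn_integral_cong) (auto split: split_indicator)
    finally show ?thesis .
  qed
  have inner: "(\<integral>\<^sup>+x. indicator B (x + a) \<partial>lborel) = emeasure lborel B" for a :: "real \<times> real"
  proof -
    have "(\<integral>\<^sup>+x. indicator B (x + a) \<partial>lborel) = (\<integral>\<^sup>+x. indicator B ((+) a x) \<partial>lborel)"
      by (simp add: add.commute)
    also have "\<dots> = integral\<^sup>N (distr lborel borel ((+) a)) (indicator B)"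
      by (rule nn_integral_distr[symmetric]) auto
    also have "\<dots> = emeasure lborel B" by (simp add: lborel_distr_plus)
    finally show ?thesis .
  qed
  have gm[measurable]: "(\<lambda>x. \<integral>\<^sup>+w. indicator B (x + Y w) \<partial>M) \<in> borel_measurable borel"
    by measurable
  have gml[measurable]: "(\<lambda>x. \<integral>\<^sup>+w. indicator B (x + Y w) \<partial>M) \<in> borel_measurable lborel"
    using gm by (simp add: measurable_lborel1)
  have [measurable]: "Measurable.pred borel (\<lambda>x. x \<in> ball c u0)"
    by (simp add: pred_def)
  have tot: "(\<integral>\<^sup>+x. (\<integral>\<^sup>+w. indicator B (x + Y w) \<partial>M) \<partial>lborel) = emeasure lborel B"
  proof -
    have "(\<integral>\<^sup>+x. (\<integral>\<^sup>+w. indicator B (x + Y w) \<partial>M) \<partial>lborel)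
        = (\<integral>\<^sup>+w. (\<integral>\<^sup>+x. indicator B (x + Y w) \<partial>lborel) \<partial>M)"
    proof -
      have fm: "(\<lambda>(x,w). indicator B (x + Y w) :: ennreal) \<in> borel_measurable (lborel \<Otimes>\<^sub>M M)"
        by measurable
      show ?thesis using Fubini'[OF fm] by (simp only: split_beta fst_conv snd_conv)
    qed
    also have "\<dots> = (\<integral>\<^sup>+w. emeasure lborel B \<partial>M)"
      by (simp add: inner)
    also have "\<dots> = emeasure lborel B" by (simp add: emeasure_space_1)
    finally show ?thesis .
  qed
  have one: "(\<integral>\<^sup>+w. indicator B (x + Y w) \<partial>M) = 1" if "x \<in> ball c u0" for x
  proof -
    have "x + Y w \<in> B" if "w \<in> space M" for w
    proof -
      have "dist c (x + Y w) \<le> dist c x + dist x (x + Y w)" by (rule dist_triangle)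
      also have "dist x (x + Y w) = norm (Y w)" by (simp add: dist_norm)
      finally show ?thesis using bnd[OF that] \<open>x \<in> ball c u0\<close> unfolding B_def by auto
    qed
    then have "(\<integral>\<^sup>+w. indicator B (x + Y w) \<partial>M) = (\<integral>\<^sup>+w. 1 \<partial>M)"
      by (intro nn_integral_cong) auto
    then show ?thesis by (simp add: emeasure_space_1)
  qed
  let ?g = "\<lambda>x. \<integral>\<^sup>+w. indicator B (x + Y w) \<partial>M"
  have "emeasure lborel B = (\<integral>\<^sup>+x. indicator (- ball c u0) x * ?g x + indicator (ball c u0) x * ?g x \<partial>lborel)"
    unfolding tot[symmetric] by (intro nn_integral_cong) (auto split: split_indicator)
  also have "\<dots> = (\<integral>\<^sup>+x. indicator (- ball c u0) x * ?g x \<partial>lborel) + (\<integral>\<^sup>+x. indicator (ball c u0) x * ?g x \<partial>lborel)"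
    by (rule nn_integral_add; measurable)
  also have "(\<integral>\<^sup>+x. indicator (ball c u0) x * ?g x \<partial>lborel) = (\<integral>\<^sup>+x. indicator (ball c u0) x \<partial>lborel)"
    by (intro nn_integral_cong) (auto simp: one split: split_indicator)
  also have "\<dots> = emeasure lborel (ball c u0)" by simp
  finally show ?thesis unfolding B_def g_eq[unfolded B_def] by simp
qed

lemma interf_val:
  fixes X :: "'w \<Rightarrow> real \<Rightarrow> real \<times> real"
  assumes PS: "prob_space M" and Ym[measurable]: "(\<lambda>w. X w t) \<in> borel_measurable M"
    and bnd: "\<And>w. w \<in> space M \<Longrightarrow> norm (X w t) \<le> r" and lam: "lam0 \<ge> 0"
  shows "\<exists>K. interf_count lam0 c u0 M X t (ball c (u0+r)) = ennreal lam0 * K \<and>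
             K + emeasure lborel (ball c u0) = emeasure lborel (ball c (u0+r))"
proof -
  interpret prob_space M by fact
  define B where "B = ball c (u0+r)"
  have Bm[measurable]: "B \<in> sets borel" unfolding B_def by simp
  have g_eq: "emeasure M {w\<in>space M. x + X w t \<in> B} = (\<integral>\<^sup>+w. indicator B (x + X w t) \<partial>M)" for x
  proof -
    have "{w\<in>space M. x + X w t \<in> B} \<in> sets M" by measurable
    then have "emeasure M {w\<in>space M. x + X w t \<in> B} = (\<integral>\<^sup>+w. indicator {w\<in>space M. x + X w t \<in> B} w \<partial>M)"
      by simp
    also have "\<dots> = (\<integral>\<^sup>+w. indicator B (x + X w t) \<partial>M)"
      by (intro nn_integral_cong) (auto split: split_indicator)
    finally show ?thesis .
  qed
  have gm: "(\<lambda>x. \<integral>\<^sup>+w. indicator B (x + X w t) \<partial>M) \<in> borel_measurable borel"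
    by measurable
  have gml[measurable]: "(\<lambda>x. \<integral>\<^sup>+w. indicator B (x + X w t) \<partial>M) \<in> borel_measurable lborel"
    using gm by (simp add: measurable_lborel1)
  have [measurable]: "Measurable.pred borel (\<lambda>x. x \<in> ball c u0)"
    by (simp add: pred_def)
  define K where "K = (\<integral>\<^sup>+ x. indicator (- ball c u0) x * emeasure M {w\<in>space M. x + X w t \<in> B} \<partial>lborel)"
  have "interf_count lam0 c u0 M X t B = (\<integral>\<^sup>+ x. ennreal lam0 * (indicator (- ball c u0) x * (\<integral>\<^sup>+w. indicator B (x + X w t) \<partial>M)) \<partial>lborel)"
    unfolding interf_count_def g_eq by (simp add: mult.assoc)
  also have "\<dots> = ennreal lam0 * (\<integral>\<^sup>+ x. indicator (- ball c u0) x * (\<integral>\<^sup>+w. indicator B (x + X w t) \<partial>M) \<partial>lborel)"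
    by (rule nn_integral_cmult) measurable
  also have "\<dots> = ennreal lam0 * K" unfolding K_def g_eq ..
  finally have 1: "interf_count lam0 c u0 M X t B = ennreal lam0 * K" .
  have 2: "K + emeasure lborel (ball c u0) = emeasure lborel B"
    unfolding K_def B_def by (rule count_eq[OF PS Ym bnd])
  show ?thesis using 1 2 unfolding B_def by blast
qed

theorem theorem1:
  fixes lam0 v t u0 :: real and c :: "real \<times> real"
    and M :: "'a measure" and X :: "'a \<Rightarrow> real \<Rightarrow> real \<times> real"
    and N :: "'b measure" and \<Theta> :: "'b \<Rightarrow> real"
  assumes "lam0 > 0" and "v \<ge> 0" and "t \<ge> 0" and "u0 \<ge> 0"
    and "iid_mobility M X v"
    and "prob_space N" and "uniform_angle N \<Theta>"
  shows "iid_mobility N (sl_traj v \<Theta>) v \<and>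
         interf_count lam0 c u0 M X t (ball c (u0 + v * t))
           \<le> interf_count lam0 c u0 N (sl_traj v \<Theta>) t (ball c (u0 + v * t))"
proof
  have Thm[measurable]: "\<Theta> \<in> borel_measurable N"
    using assms(7) unfolding uniform_angle_def by blast
  have sq: "(a * cos b)\<^sup>2 + (a * sin b)\<^sup>2 = a\<^sup>2" for a b :: real
  proof -
    have "(a * cos b)\<^sup>2 + (a * sin b)\<^sup>2 = a\<^sup>2 * ((sin b)\<^sup>2 + (cos b)\<^sup>2)"
      by (simp only: power_mult_distrib distrib_left add.commute)
    then show ?thesis by simp
  qed
  have nrm: "norm (sl_traj v \<Theta> w s) = \<bar>v * s\<bar>" for w s
    unfolding sl_traj_def norm_Pair
    using sq[of "v * s" "\<Theta> w"] by simp
  have dst: "dist (sl_traj v \<Theta> w s) (sl_traj v \<Theta> w s') = v * \<bar>s - s'\<bar>" for w s s'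
  proof -
    have "dist (sl_traj v \<Theta> w s) (sl_traj v \<Theta> w s') = sqrt ((dist (v * s * cos (\<Theta> w)) (v * s' * cos (\<Theta> w)))\<^sup>2 + (dist (v * s * sin (\<Theta> w)) (v * s' * sin (\<Theta> w)))\<^sup>2)"
      by (simp add: sl_traj_def dist_Pair_Pair)
    also have "\<dots> = sqrt (((v * s - v * s') * cos (\<Theta> w))\<^sup>2 + ((v * s - v * s') * sin (\<Theta> w))\<^sup>2)"
      by (simp only: dist_real_def power2_abs left_diff_distrib)
    also have "\<dots> = sqrt ((v * s - v * s')\<^sup>2)" by (simp only: sq)
    also have "\<dots> = \<bar>v * s - v * s'\<bar>" by simp
    also have "\<dots> = v * \<bar>s - s'\<bar>" using assms(2)
      by (simp add: abs_mult right_diff_distrib[symmetric])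
    finally show ?thesis .
  qed
  have slm[measurable]: "(\<lambda>w. sl_traj v \<Theta> w s) \<in> borel_measurable N" for s
    unfolding sl_traj_def by measurable
  show "iid_mobility N (sl_traj v \<Theta>) v"
    unfolding iid_mobility_def
  proof (intro conjI allI impI)
    show "prob_space N" by fact
    show "sl_traj v \<Theta> w 0 = 0" for w by (simp add: sl_traj_def zero_prod_def)
    show "dist (sl_traj v \<Theta> w s) (sl_traj v \<Theta> w s') \<le> v * \<bar>s - s'\<bar>" for w s s'
      by (simp add: dst)
    fix s :: real assume s: "0 \<le> s"
    show "(\<lambda>w. sl_traj v \<Theta> w s) \<in> borel_measurable N" by measurable
    have ne: "(\<lambda>w. norm (sl_traj v \<Theta> w s)) = (\<lambda>w. v * s)"
      using s assms(2) by (simp add: nrm)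
    show "\<exists>\<Theta>'. uniform_angle N \<Theta>' \<and>
              prob_space.indep_var N borel (\<lambda>w. norm (sl_traj v \<Theta> w s)) borel \<Theta>' \<and>
              (\<forall>w\<in>space N. sl_traj v \<Theta> w s = (norm (sl_traj v \<Theta> w s) * cos (\<Theta>' w), norm (sl_traj v \<Theta> w s) * sin (\<Theta>' w)))"
      apply (rule exI[of _ \<Theta>])
      unfolding ne
      using assms(7) indep_const[OF assms(6) Thm, of "v * s"] fun_cong[OF ne]
      by (simp add: sl_traj_def)
  qed
  have iM: "prob_space M" "(\<lambda>w. X w t) \<in> borel_measurable M"
    and iMd: "\<And>w s s'. 0 \<le> s \<Longrightarrow> 0 \<le> s' \<Longrightarrow> dist (X w s) (X w s') \<le> v * \<bar>s - s'\<bar>"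
    and iM0: "\<And>w. X w 0 = 0"
    using assms(5) assms(3) unfolding iid_mobility_def by blast+
  have bM: "norm (X w t) \<le> v * t" for w
    using iMd[of t 0 w] iM0[of w] assms(3) by (simp add: dist_norm)
  have bN: "norm (sl_traj v \<Theta> w t) \<le> v * t" for w
    using assms(2,3) by (simp add: nrm)
  obtain K1 where K1: "interf_count lam0 c u0 M X t (ball c (u0 + v * t)) = ennreal lam0 * K1"
     "K1 + emeasure lborel (ball c u0) = emeasure lborel (ball c (u0 + v * t))"
    using interf_val[of M X t "v * t" lam0 c u0] iM bM assms(1) by auto
  obtain K2 where K2: "interf_count lam0 c u0 N (sl_traj v \<Theta>) t (ball c (u0 + v * t)) = ennreal lam0 * K2"
     "K2 + emeasure lborel (ball c u0) = emeasure lborel (ball c (u0 + v * t))"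
    using interf_val[of N "sl_traj v \<Theta>" t "v * t" lam0 c u0] assms(6) slm bN assms(1) by auto
  have fin: "emeasure lborel (ball c u0) \<noteq> \<infinity>"
    using emeasure_lborel_ball_finite[of c u0] by simp
  have "K1 = K2"
    using K1(2) K2(2) fin by (metis add.commute ennreal_add_left_cancel)
  then show "interf_count lam0 c u0 M X t (ball c (u0 + v * t))
           \<le> interf_count lam0 c u0 N (sl_traj v \<Theta>) t (ball c (u0 + v * t))"
    using K1(1) K2(1) by simp
qed

end
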